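(* A green Veldkamp quadrangle $\Gamma$ is flat if and only if $\Gamma$ contains no weeds.
   Context: A graph is a pair $(V,E)$ with $E$ a set of $2$-element subsets of $V$; $\Gamma_v$ is the set of neighbors of $v$. An $s$-path is a sequence $(x_0,\dots,x_s)$ of vertices with consecutive vertices adjacent and $x_{i-2}\ne x_i$ for $i\in[2,s]$; ${\rm dist}$ is graph distance. A closed $s$-path is an $s$-path with $s\ge3$ whose first and last vertices coincide; an $s$-circuit is the subgraph determined by a closed $s$-path. An opposition relation on a set $X$ is a symmetric anti-reflexive relation; trivial if any two distinct elements are related; $k$-plump if for every $S\subseteq X$ with $|S|\le k$ some element of $X$ is related to all elements of $S$. A Veldkamp graph is a graph with a $2$-plump opposition relation $\equiv_v$ on $\Gamma_v$ for each vertex $v$. A path $(v_0,\dots,v_s)$ is straight if $v_{i-1}\equiv_{v_i}v_{i+1}$ for all $i\in[1,s-1]$; a circuit is straight if every path in it is straight. A Veldkamp $n$-gon ($n\ge2$) is a Veldkamp graph satisfying (VP1) connected and bipartite; (VP2) for each $k\in[1,n-1]$ each straight $k$-path is the unique straight path between its endpoints of length at most $k$; (VP3) every straight $(n+1)$-path lies in a straight $2n$-circuit. A root is a straight $n$-path; two vertices are opposite if there is a root between them; $x^{\rm op}$ is the set of vertices opposite $x$; the polygon is flat if $x^{\rm op}=y^{\rm op}$ implies $x=y$ for all vertices $x,y$. A Veldkamp quadrangle is a Veldkamp $4$-gon, with bipartition classes called points $P$ and lines $L$; it is green if $\equiv_x$ is trivial for every line $x$. A weed is a non-straight $4$-path $(a,x,b,y,c)$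 with $a,b,c\in P$ and ${\rm dist}(a,c)=4$. *)

theory Defs
  imports Main
begin

definition graph :: "'a set \<Rightarrow> 'a set set \<Rightarrow> bool" where
  "graph V E \<longleftrightarrow> (\<forall>e\<in>E. \<exists>x y. x \<noteq> y \<and> x \<in> V \<and> y \<in> V \<and> e = {x, y})"

definition nbrs :: "'a set set \<Rightarrow> 'a \<Rightarrow> 'a set" where
  "nbrs E v = {u. {v, u} \<in> E}"

definition opposition_rel :: "'a set \<Rightarrow> ('a \<Rightarrow> 'a \<Rightarrow> bool) \<Rightarrow> bool" where
  "opposition_rel X R \<longleftrightarrow> (\<forall>x y. R x y \<longrightarrow> x \<in> X \<and> y \<in> X)
     \<and> (\<forall>x y. R x y \<longrightarrow> R y x) \<and> (\<forall>x. \<not> R x x)"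

definition trivial_opp :: "'a set \<Rightarrow> ('a \<Rightarrow> 'a \<Rightarrow> bool) \<Rightarrow> bool" where
  "trivial_opp X R \<longleftrightarrow> (\<forall>x\<in>X. \<forall>y\<in>X. x \<noteq> y \<longrightarrow> R x y)"

definition plump :: "nat \<Rightarrow> 'a set \<Rightarrow> ('a \<Rightarrow> 'a \<Rightarrow> bool) \<Rightarrow> bool" where
  "plump k X R \<longleftrightarrow> (\<forall>S. S \<subseteq> X \<and> finite S \<and> card S \<le> k \<longrightarrow> (\<exists>x\<in>X. \<forall>s\<in>S. R x s))"

definition veldkamp_graph :: "'a set \<Rightarrow> 'a set set \<Rightarrow> ('a \<Rightarrow> 'a \<Rightarrow> 'a \<Rightarrow> bool) \<Rightarrow> bool" where
  "veldkamp_graph V E opp \<longleftrightarrow> graph V E \<and>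
     (\<forall>v\<in>V. opposition_rel (nbrs E v) (opp v) \<and> plump 2 (nbrs E v) (opp v))"

definition is_walk :: "'a set \<Rightarrow> 'a set set \<Rightarrow> 'a list \<Rightarrow> bool" where
  "is_walk V E xs \<longleftrightarrow> xs \<noteq> [] \<and> set xs \<subseteq> V \<and>
     (\<forall>i. Suc i < length xs \<longrightarrow> {xs ! i, xs ! Suc i} \<in> E)"

(* s-paths: walks without immediate backtracking; the length s is length xs - 1 *)
definition is_path :: "'a set \<Rightarrow> 'a set set \<Rightarrow> 'a list \<Rightarrow> bool" where
  "is_path V E xs \<longleftrightarrow> is_walk V E xs \<and>
     (\<forall>i. i + 2 < length xs \<longrightarrow> xs ! i \<noteq> xs ! (i + 2))"

definition plen :: "'a list \<Rightarrow> nat" where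
  "plen xs = length xs - 1"

definition gdist :: "'a set \<Rightarrow> 'a set set \<Rightarrow> 'a \<Rightarrow> 'a \<Rightarrow> nat" where
  "gdist V E a b = (LEAST n. \<exists>w. is_walk V E w \<and> hd w = a \<and> last w = b \<and> plen w = n)"

definition connected_graph :: "'a set \<Rightarrow> 'a set set \<Rightarrow> bool" where
  "connected_graph V E \<longleftrightarrow> (\<forall>a\<in>V. \<forall>b\<in>V. \<exists>w. is_walk V E w \<and> hd w = a \<and> last w = b)"

definition bipartite :: "'a set \<Rightarrow> 'a set set \<Rightarrow> bool" where
  "bipartite V E \<longleftrightarrow> (\<exists>f :: 'a \<Rightarrow> bool. \<forall>x y. {x, y} \<in> E \<longrightarrow> f x \<noteq> f y)"

definition straight :: "('a \<Rightarrow> 'a \<Rightarrow> 'a \<Rightarrow> bool) \<Rightarrow> 'a list \<Rightarrow> bool" where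
  "straight opp xs \<longleftrightarrow> (\<forall>i. i + 2 < length xs \<longrightarrow> opp (xs ! (i + 1)) (xs ! i) (xs ! (i + 2)))"

definition closed_path :: "'a set \<Rightarrow> 'a set set \<Rightarrow> 'a list \<Rightarrow> bool" where
  "closed_path V E xs \<longleftrightarrow> is_path V E xs \<and> plen xs \<ge> 3 \<and> hd xs = last xs"

(* the subgraph determined by a closed path c: vertices set c, edges circ_edges c *)
definition circ_edges :: "'a list \<Rightarrow> 'a set set" where
  "circ_edges c = {{c ! i, c ! Suc i} | i. Suc i < length c}"

definition path_in_circuit :: "'a list \<Rightarrow> 'a list \<Rightarrow> bool" where
  "path_in_circuit c p \<longleftrightarrow> is_path (set c) (circ_edges c) p"

definition straight_circuit :: "('a \<Rightarrow> 'a \<Rightarrow> 'a \<Rightarrow> bool) \<Rightarrow> 'a list \<Rightarrow> bool" where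
  "straight_circuit opp c \<longleftrightarrow> (\<forall>p. path_in_circuit c p \<longrightarrow> straight opp p)"

definition veldkamp_ngon :: "nat \<Rightarrow> 'a set \<Rightarrow> 'a set set \<Rightarrow> ('a \<Rightarrow> 'a \<Rightarrow> 'a \<Rightarrow> bool) \<Rightarrow> bool" where
  "veldkamp_ngon n V E opp \<longleftrightarrow> n \<ge> 2 \<and> veldkamp_graph V E opp \<and>
     connected_graph V E \<and> bipartite V E \<and>
     (\<forall>k p q. 1 \<le> k \<and> k \<le> n - 1 \<and> is_path V E p \<and> straight opp p \<and> plen p = k \<and>
        is_path V E q \<and> straight opp q \<and> plen q \<le> k \<and> hd q = hd p \<and> last q = last p
        \<longrightarrow> q = p) \<and>
     (\<forall>p. is_path V E p \<and> straight opp p \<and> plen p = n + 1 \<longrightarrow>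
        (\<exists>c. closed_path V E c \<and> plen c = 2 * n \<and> straight_circuit opp c \<and> path_in_circuit c p))"

definition opposite :: "nat \<Rightarrow> 'a set \<Rightarrow> 'a set set \<Rightarrow> ('a \<Rightarrow> 'a \<Rightarrow> 'a \<Rightarrow> bool) \<Rightarrow> 'a \<Rightarrow> 'a \<Rightarrow> bool" where
  "opposite n V E opp x y \<longleftrightarrow>
     (\<exists>p. is_path V E p \<and> straight opp p \<and> plen p = n \<and> hd p = x \<and> last p = y)"

definition op_set :: "nat \<Rightarrow> 'a set \<Rightarrow> 'a set set \<Rightarrow> ('a \<Rightarrow> 'a \<Rightarrow> 'a \<Rightarrow> bool) \<Rightarrow> 'a \<Rightarrow> 'a set" where
  "op_set n V E opp x = {y \<in> V. opposite n V E opp x y}"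

definition flat :: "nat \<Rightarrow> 'a set \<Rightarrow> 'a set set \<Rightarrow> ('a \<Rightarrow> 'a \<Rightarrow> 'a \<Rightarrow> bool) \<Rightarrow> bool" where
  "flat n V E opp \<longleftrightarrow> (\<forall>x\<in>V. \<forall>y\<in>V. op_set n V E opp x = op_set n V E opp y \<longrightarrow> x = y)"

definition veldkamp_quadrangle ::
  "'a set \<Rightarrow> 'a set \<Rightarrow> 'a set set \<Rightarrow> ('a \<Rightarrow> 'a \<Rightarrow> 'a \<Rightarrow> bool) \<Rightarrow> bool" where
  "veldkamp_quadrangle P L E opp \<longleftrightarrow> veldkamp_ngon 4 (P \<union> L) E opp \<and> P \<inter> L = {} \<and>
     (\<forall>e\<in>E. \<exists>p\<in>P. \<exists>l\<in>L. e = {p, l})"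

definition green :: "'a set \<Rightarrow> 'a set set \<Rightarrow> ('a \<Rightarrow> 'a \<Rightarrow> 'a \<Rightarrow> bool) \<Rightarrow> bool" where
  "green L E opp \<longleftrightarrow> (\<forall>x\<in>L. trivial_opp (nbrs E x) (opp x))"

definition weed :: "'a set \<Rightarrow> 'a set \<Rightarrow> 'a set set \<Rightarrow> ('a \<Rightarrow> 'a \<Rightarrow> 'a \<Rightarrow> bool) \<Rightarrow> 'a list \<Rightarrow> bool" where
  "weed P L E opp w \<longleftrightarrow> is_path (P \<union> L) E w \<and> plen w = 4 \<and> \<not> straight opp w \<and>
     w ! 0 \<in> P \<and> w ! 2 \<in> P \<and> w ! 4 \<in> P \<and> gdist (P \<union> L) E (w ! 0) (w ! 4) = 4"

end

theory Submission imports Defs begin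

lemma all_less_Suc2: "(\<forall>i. Suc i < Suc (Suc n) \<longrightarrow> Q i) \<longleftrightarrow> Q 0 \<and> (\<forall>i. Suc i < Suc n \<longrightarrow> Q (Suc i))"
  by (metis Suc_less_eq nat.exhaust zero_less_Suc)

lemma all_less_2: "(\<forall>i. i + 2 < Suc (Suc (Suc n)) \<longrightarrow> Q i) \<longleftrightarrow> Q 0 \<and> (\<forall>i. i + 2 < Suc (Suc n) \<longrightarrow> Q (Suc i))"
  by (metis Suc_less_eq add_Suc nat.exhaust zero_less_Suc add_2_eq_Suc')

lemma is_walk_single[simp]: "is_walk V E [x] \<longleftrightarrow> x \<in> V"
  by (simp add: is_walk_def)

lemma is_walk_Cons2[simp]: "is_walk V E (x#y#xs) \<longleftrightarrow> x \<in> V \<and> {x,y} \<in> E \<and> is_walk V E (y#xs)"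
  unfolding is_walk_def by (simp only: length_Cons all_less_Suc2) auto

lemma is_path_single[simp]: "is_path V E [x] \<longleftrightarrow> x \<in> V"
  by (simp add: is_path_def)

lemma is_path_two[simp]: "is_path V E [x,y] \<longleftrightarrow> x \<in> V \<and> y \<in> V \<and> {x,y} \<in> E"
  by (auto simp: is_path_def)

lemma is_path_Cons3[simp]: "is_path V E (x#y#z#xs) \<longleftrightarrow> x \<in> V \<and> {x,y} \<in> E \<and> x \<noteq> z \<and> is_path V E (y#z#xs)"
  unfolding is_path_def by (simp only: length_Cons all_less_2 is_walk_Cons2) auto

lemma straight_short[simp]: "straight opp []" "straight opp [x]" "straight opp [x,y]"
  by (auto simp: straight_def)

lemma straight_Cons3[simp]: "straight opp (x#y#z#xs) \<longleftrightarrow> opp y x z \<and> straight opp (y#z#xs)"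
  unfolding straight_def by (simp only: length_Cons all_less_2) auto

lemma plen_simps[simp]: "plen xs = length xs - 1" by (simp add: plen_def)

lemma is_walk_mono: "is_walk V E q \<Longrightarrow> V \<subseteq> V' \<Longrightarrow> E \<subseteq> E' \<Longrightarrow> is_walk V' E' q"
  unfolding is_walk_def by blast
lemma is_path_mono: "is_path V E q \<Longrightarrow> V \<subseteq> V' \<Longrightarrow> E \<subseteq> E' \<Longrightarrow> is_path V' E' q"
  unfolding is_path_def using is_walk_mono by blast

lemma circ_edges_sub: "is_walk V E c \<Longrightarrow> circ_edges c \<subseteq> E"
  unfolding is_walk_def circ_edges_def by auto

lemma list5: "length p = 5 \<Longrightarrow> \<exists>a b c d e. p = [a,b,c,d,e]"
  by (simp add: length_Suc_conv numeral_eq_Suc) blast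


definition nxt :: "nat \<Rightarrow> nat \<Rightarrow> bool" where "nxt a b \<longleftrightarrow> (a < 7 \<and> b = a + 1) \<or> (a = 7 \<and> b = 0)"
lemma nxt_dir: "(nxt a b \<or> nxt b a) \<Longrightarrow> (nxt b d \<or> nxt d b) \<Longrightarrow> a \<noteq> d \<Longrightarrow> b < 8 \<Longrightarrow>
  (nxt a b \<longrightarrow> nxt b d) \<and> (nxt b a \<longrightarrow> nxt d b)"
  unfolding nxt_def by arith
lemma nxt_close: "nxt i0 i1 \<Longrightarrow> nxt i1 i2 \<Longrightarrow> nxt i2 i3 \<Longrightarrow> nxt i3 i4 \<Longrightarrow> nxt i4 i5 \<Longrightarrow>
  \<exists>j6 j7. nxt i5 j6 \<and> nxt j6 j7 \<and> nxt j7 i0"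
  unfolding nxt_def by arith
lemma nxt_lt: "nxt a b \<Longrightarrow> a < 8 \<and> b < 8" unfolding nxt_def by arith
lemma nxt_2: "nxt a b \<Longrightarrow> nxt b d \<Longrightarrow> a \<noteq> d" unfolding nxt_def by arith

locale gvq =
  fixes P L :: "'a set" and E :: "'a set set" and opp :: "'a \<Rightarrow> 'a \<Rightarrow> 'a \<Rightarrow> bool"
  assumes vq: "veldkamp_quadrangle P L E opp" and gr: "green L E opp"
begin

abbreviation VV where "VV \<equiv> P \<union> L"

definition adj :: "'a \<Rightarrow> 'a \<Rightarrow> bool" where "adj x y \<longleftrightarrow> {x,y} \<in> E"

lemma vn: "veldkamp_ngon 4 VV E opp" using vq by (simp add: veldkamp_quadrangle_def)
lemma disj: "P \<inter> L = {}" using vq by (simp add: veldkamp_quadrangle_def)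
lemma edgesPL: "\<forall>e\<in>E. \<exists>p\<in>P. \<exists>l\<in>L. e = {p, l}" using vq by (simp add: veldkamp_quadrangle_def)
lemma vg: "veldkamp_graph VV E opp" using vn by (simp add: veldkamp_ngon_def)
lemma gph: "graph VV E" using vg by (simp add: veldkamp_graph_def)
lemma vp2raw: "\<forall>k p q. 1 \<le> k \<and> k \<le> 4 - 1 \<and> is_path VV E p \<and> straight opp p \<and> plen p = k \<and>
        is_path VV E q \<and> straight opp q \<and> plen q \<le> k \<and> hd q = hd p \<and> last q = last p
        \<longrightarrow> q = p"
  using vn unfolding veldkamp_ngon_def by (elim conjE)
lemma vp2: "\<And>k p q. 1 \<le> k \<Longrightarrow> k \<le> 3 \<Longrightarrow> is_path VV E p \<Longrightarrow> straight opp p \<Longrightarrow> plen p = k \<Longrightarrow>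
        is_path VV E q \<Longrightarrow> straight opp q \<Longrightarrow> plen q \<le> k \<Longrightarrow> hd q = hd p \<Longrightarrow> last q = last p \<Longrightarrow> q = p"
proof -
  fix k p q assume "1 \<le> k" "k \<le> 3" "is_path VV E p" "straight opp p" "plen p = k"
        "is_path VV E q" "straight opp q" "plen q \<le> k" "hd q = hd p" "last q = last p"
  moreover have "(4::nat) - 1 = 3" by simp
  ultimately show "q = p" using vp2raw by metis
qed
lemma vp3raw: "\<forall>p. is_path VV E p \<and> straight opp p \<and> plen p = 4 + 1 \<longrightarrow>
        (\<exists>c. closed_path VV E c \<and> plen c = 2 * 4 \<and> straight_circuit opp c \<and> path_in_circuit c p)"
  using vn unfolding veldkamp_ngon_def by (elim conjE)
lemma vp3: "\<And>p. is_path VV E p \<Longrightarrow> straight opp p \<Longrightarrow> plen p = 5 \<Longrightarrow>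
        (\<exists>c. closed_path VV E c \<and> plen c = 8 \<and> straight_circuit opp c \<and> path_in_circuit c p)"
  using vp3raw by simp

lemma adj_sym: "adj x y \<Longrightarrow> adj y x" by (simp add: adj_def insert_commute)
lemma adj_PL: "adj x y \<Longrightarrow> (x \<in> P \<and> y \<in> L) \<or> (x \<in> L \<and> y \<in> P)"
proof -
  assume "adj x y"
  then obtain p l where "p \<in> P" "l \<in> L" "{x,y} = {p,l}" using edgesPL unfolding adj_def by blast
  then show ?thesis unfolding doubleton_eq_iff by blast
qed
lemma PnL: "x \<in> P \<Longrightarrow> x \<notin> L" using disj by auto
lemma adj_V: "adj x y \<Longrightarrow> x \<in> VV" "adj x y \<Longrightarrow> y \<in> VV" using adj_PL by blast+
lemma adj_neq: "adj x y \<Longrightarrow> x \<noteq> y" using adj_PL PnL by blast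
lemma adjE: "{x,y} \<in> E \<longleftrightarrow> adj x y" by (simp add: adj_def)

lemma nbrs_eq: "nbrs E v = {u. adj v u}" by (simp add: nbrs_def adj_def)

lemma opprel: "v \<in> VV \<Longrightarrow> opposition_rel {u. adj v u} (opp v)"
  using vg unfolding veldkamp_graph_def nbrs_eq[symmetric] by simp
lemma plumpv: "v \<in> VV \<Longrightarrow> plump 2 {u. adj v u} (opp v)"
  using vg unfolding veldkamp_graph_def nbrs_eq[symmetric] by simp

lemma opp_adj: "v \<in> VV \<Longrightarrow> opp v x y \<Longrightarrow> adj v x \<and> adj v y"
  using opprel unfolding opposition_rel_def by blast
lemma opp_sym: "v \<in> VV \<Longrightarrow> opp v x y \<Longrightarrow> opp v y x"
  using opprel unfolding opposition_rel_def by blast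
lemma opp_irr: "v \<in> VV \<Longrightarrow> \<not> opp v x x"
  using opprel unfolding opposition_rel_def by blast
lemma opp_neq: "v \<in> VV \<Longrightarrow> opp v x y \<Longrightarrow> x \<noteq> y"
  using opp_irr by blast

lemma plump0: "v \<in> VV \<Longrightarrow> \<exists>x. adj v x"
proof -
  assume "v \<in> VV"
  then have "{} \<subseteq> {u. adj v u} \<and> finite {} \<and> card {} \<le> (2::nat)" by auto
  from plumpv[OF \<open>v \<in> VV\<close>, unfolded plump_def, rule_format, OF this] show ?thesis by auto
qed
lemma plump1: "v \<in> VV \<Longrightarrow> adj v a \<Longrightarrow> \<exists>x. adj v x \<and> opp v x a"
proof -
  assume "v \<in> VV" "adj v a"
  then have "{a} \<subseteq> {u. adj v u} \<and> finite {a} \<and> card {a} \<le> 2" by auto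
  from plumpv[OF \<open>v \<in> VV\<close>, unfolded plump_def, rule_format, OF this] show ?thesis by auto
qed
lemma plump2: "v \<in> VV \<Longrightarrow> adj v a \<Longrightarrow> adj v b \<Longrightarrow> \<exists>x. adj v x \<and> opp v x a \<and> opp v x b"
proof -
  assume "v \<in> VV" "adj v a" "adj v b"
  then have "{a,b} \<subseteq> {u. adj v u} \<and> finite {a,b} \<and> card {a,b} \<le> 2" by (auto simp: card_insert_if)
  from plumpv[OF \<open>v \<in> VV\<close>, unfolded plump_def, rule_format, OF this] show ?thesis by auto
qed
lemma green: "l \<in> L \<Longrightarrow> adj l p \<Longrightarrow> adj l q \<Longrightarrow> p \<noteq> q \<Longrightarrow> opp l p q"
  using gr unfolding green_def trivial_opp_def nbrs_eq by blast


lemma G1P: assumes "p \<in> P" "p \<noteq> q" "adj l p" "adj l q" "adj m p" "adj m q" shows "l = m"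
proof -
  have lL: "l \<in> L" "m \<in> L" using assms(1,3,5) adj_PL PnL by blast+
  have q: "q \<in> VV" using assms(4) adj_V by blast
  have e: "{p,l} \<in> E" "{l,q} \<in> E" "{p,m} \<in> E" "{m,q} \<in> E"
    using adj_sym[OF assms(3)] assms(4) adj_sym[OF assms(5)] assms(6) unfolding adjE by auto
  have o: "opp l p q" "opp m p q" using green[OF lL(1) assms(3,4,2)] green[OF lL(2) assms(5,6,2)] by auto
  have pV: "p \<in> VV" "l \<in> VV" "m \<in> VV" using assms(1) lL by blast+
  have pa: "is_path VV E [p,l,q]" "straight opp [p,l,q]"
    using e o q pV assms(2) by simp_all
  have pb: "is_path VV E [p,m,q]" "straight opp [p,m,q]"
    using e o q pV assms(2) by simp_all
  have "[p,m,q] = [p,l,q]" by (rule vp2[of 2, OF _ _ pa(1) pa(2) _ pb(1) pb(2)]) simp_all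
  then show ?thesis by simp
qed

lemma G1: assumes "p \<noteq> q" "adj l p" "adj l q" "adj m p" "adj m q" shows "l = m"
proof (cases "p \<in> P")
  case True show ?thesis by (rule G1P[OF True assms])
next
  case False
  then have "p \<in> L" using assms(2) adj_PL by blast
  then have lP: "l \<in> P" using assms(2) adj_PL PnL by blast
  show ?thesis
  proof (rule ccontr)
    assume "l \<noteq> m"
    have "p = q" by (rule G1P[OF lP \<open>l \<noteq> m\<close> adj_sym[OF assms(2)] adj_sym[OF assms(4)] adj_sym[OF assms(3)] adj_sym[OF assms(5)]])
    then show False using assms(1) by simp
  qed
qed


definition opp4 where "opp4 x y \<longleftrightarrow> (\<exists>a b c. is_path VV E [x,a,b,c,y] \<and> straight opp [x,a,b,c,y])"

lemma opposite_iff: "opposite 4 VV E opp x y \<longleftrightarrow> opp4 x y"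
proof
  assume "opposite 4 VV E opp x y"
  then obtain p where p: "is_path VV E p" "straight opp p" "plen p = 4" "hd p = x" "last p = y"
    unfolding opposite_def by blast
  then have "length p = 5" unfolding is_path_def is_walk_def by (cases p) auto
  then obtain a b c d e where "p = [a,b,c,d,e]" using list5 by blast
  then show "opp4 x y" using p unfolding opp4_def by auto
next
  assume "opp4 x y"
  then obtain a b c where "is_path VV E [x,a,b,c,y]" "straight opp [x,a,b,c,y]" unfolding opp4_def by blast
  then show "opposite 4 VV E opp x y" unfolding opposite_def by (intro exI[of _ "[x,a,b,c,y]"]) simp
qed

lemma AP:
  assumes pp: "is_path VV E [x0,x1,x2,x3,x4,x5]" and sp: "straight opp [x0,x1,x2,x3,x4,x5]"
  shows "\<exists>w6 w7. is_path VV E [x4,x5,w6,w7,x0,x1] \<and> straight opp [x4,x5,w6,w7,x0,x1]"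
proof -
  obtain c where cc: "closed_path VV E c" and cl: "plen c = 8" and cs: "straight_circuit opp c"
    and cp: "path_in_circuit c [x0,x1,x2,x3,x4,x5]"
    using vp3[OF pp sp] by auto
  have cpath: "is_path VV E c" using cc unfolding closed_path_def by simp
  have cwalk: "is_walk VV E c" using cpath unfolding is_path_def by simp
  have cne: "c \<noteq> []" using cwalk unfolding is_walk_def by simp
  have lc: "length c = 9" using cl cne by (cases c) auto
  have c80: "c!8 = c!0"
  proof -
    have "hd c = last c" using cc unfolding closed_path_def by simp
    then show ?thesis using cne lc by (simp add: hd_conv_nth last_conv_nth)
  qed
  have cE: "\<And>i. i < 8 \<Longrightarrow> {c!i, c!Suc i} \<in> E" using cwalk lc unfolding is_walk_def by auto
  have cV: "\<And>i. i < 9 \<Longrightarrow> c!i \<in> VV" using cwalk lc unfolding is_walk_def by (auto simp: set_conv_nth)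
  have cnb: "\<And>i. i + 2 < 9 \<Longrightarrow> c!i \<noteq> c!(i+2)" using cpath lc unfolding is_path_def by auto
  have cadj: "\<And>i. i < 8 \<Longrightarrow> adj (c!i) (c!Suc i)" using cE adjE by blast
  have ceS: "\<And>i. i < 8 \<Longrightarrow> {c!i, c!Suc i} \<in> circ_edges c" unfolding circ_edges_def using lc by auto
  have ceSub: "circ_edges c \<subseteq> E" using circ_edges_sub[OF cwalk] .
  have setc: "set c \<subseteq> VV" using cwalk unfolding is_walk_def by simp
  have ctyp: "\<And>i. i < 9 \<Longrightarrow> (c!i \<in> P) = ((c!0 \<in> P) = even i)"
  proof -
    fix i show "i < 9 \<Longrightarrow> (c!i \<in> P) = ((c!0 \<in> P) = even i)"
    proof (induction i)
      case 0 then show ?case by simp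
    next
      case (Suc i)
      then have "adj (c!i) (c!Suc i)" using cadj by simp
      then have "(c!Suc i \<in> P) = (c!i \<notin> P)" using adj_PL PnL by blast
      then show ?case using Suc by simp
    qed
  qed
  have d4: "\<And>i. i + 4 < 9 \<Longrightarrow> c!i \<noteq> c!(i+4)"
  proof
    fix i assume i: "i + 4 < 9" and eq: "c!i = c!(i+4)"
    have a1: "adj (c!(i+1)) (c!i)" using cadj[of i] i by (simp add: adj_sym)
    have a2: "adj (c!(i+1)) (c!(i+2))" using cadj[of "i+1"] i by (simp add: numeral_eq_Suc)
    have a3: "adj (c!(i+3)) (c!(i+2))" using cadj[of "i+2"] i by (simp add: adj_sym numeral_eq_Suc)
    have a4: "adj (c!(i+3)) (c!i)" using cadj[of "i+3"] i eq by (simp add: numeral_eq_Suc)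
    have "c!(i+1) = c!(i+3)" by (rule G1[OF cnb[of i] a1 a2 a4 a3]) (use i in simp)
    then show False using cnb[of "i+1"] i by (simp add: numeral_eq_Suc)
  qed
  have inH: "\<And>q. path_in_circuit c q \<Longrightarrow> is_path VV E q \<and> straight opp q"
    using cs setc ceSub is_path_mono unfolding straight_circuit_def path_in_circuit_def by blast
  have d6: "c!1 \<noteq> c!7"
  proof
    assume eq: "c!1 = c!7"
    have pa: "path_in_circuit c [c!1, c!2, c!3, c!4]"
      unfolding path_in_circuit_def using ceS[of 1] ceS[of 2] ceS[of 3] cnb[of 1] cnb[of 2] lc
      by (auto simp: numeral_eq_Suc)
    have pb: "path_in_circuit c [c!7, c!6, c!5, c!4]"
      unfolding path_in_circuit_def using ceS[of 6] ceS[of 5] ceS[of 4] cnb[of 5] cnb[of 4] lc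
      by (auto simp: numeral_eq_Suc insert_commute)
    have "[c!7, c!6, c!5, c!4] = [c!1, c!2, c!3, c!4]"
      by (rule vp2[of 3, OF _ _ conjunct1[OF inH[OF pa]] conjunct2[OF inH[OF pa]] _
             conjunct1[OF inH[OF pb]] conjunct2[OF inH[OF pb]]]) (use eq in simp_all)
    then have "c!6 = c!2" by simp
    then show False using d4[of 2] by simp
  qed
  have dist: "\<And>i j. i < 8 \<Longrightarrow> j < 8 \<Longrightarrow> c!i = c!j \<Longrightarrow> i = j"
  proof -
    have "\<And>i j. i < j \<Longrightarrow> j < 8 \<Longrightarrow> c!i \<noteq> c!j"
    proof
      fix i j assume ij: "i < j" "j < 8" and eq: "c!i = c!j"
      have "(c!i \<in> P) = (c!j \<in> P)" using eq by simp
      then have ev: "even i = even j" using ctyp[of i] ctyp[of j] ij by auto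
      have "j = i + 2 \<or> j = i + 4 \<or> (i = 0 \<and> j = 6) \<or> (i = 1 \<and> j = 7)"
        using ij ev by presburger
      then consider "j = i + 2" | "j = i + 4" | "i = 0 \<and> j = 6" | "i = 1 \<and> j = 7" by blast
      then show False
      proof cases
        case 1 then show ?thesis using cnb[of i] eq ij by simp
      next
        case 2 then show ?thesis using d4[of i] eq ij by simp
      next
        case 3 then show ?thesis using cnb[of 6] eq c80 by simp
      next
        case 4 then show ?thesis using d6 eq by simp
      qed
    qed
    then show "\<And>i j. i < 8 \<Longrightarrow> j < 8 \<Longrightarrow> c!i = c!j \<Longrightarrow> i = j"
      by (metis linorder_neqE_nat)
  qed
  have ceN: "\<And>a b. nxt a b \<Longrightarrow> {c!a, c!b} \<in> circ_edges c"
  proof -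
    fix a b assume "nxt a b"
    then consider "a < 7" "b = a + 1" | "a = 7" "b = 0" unfolding nxt_def by blast
    then show "{c!a, c!b} \<in> circ_edges c"
    proof cases
      case 1 then show ?thesis using ceS[of a] by simp
    next
      case 2 then show ?thesis using ceS[of 7] c80 by simp
    qed
  qed
  have stp: "\<And>a b. a < 8 \<Longrightarrow> b < 8 \<Longrightarrow> {c!a, c!b} \<in> circ_edges c \<Longrightarrow> nxt a b \<or> nxt b a"
  proof -
    fix a b :: nat assume ab: "a < 8" "b < 8" "{c!a, c!b} \<in> circ_edges c"
    then obtain i where i: "Suc i < length c" "{c!a, c!b} = {c!i, c!Suc i}" unfolding circ_edges_def by blast
    have i8: "i < 8" using i lc by simp
    obtain i' where i': "nxt i i'" "c!Suc i = c!i'"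
    proof (cases "i < 7")
      case True then show ?thesis using that[of "Suc i"] unfolding nxt_def by simp
    next
      case False then have "i = 7" using i8 by simp
      then show ?thesis using that[of 0] c80 unfolding nxt_def by simp
    qed
    have i'8: "i' < 8" using nxt_lt[OF i'(1)] by simp
    have "{c!a, c!b} = {c!i, c!i'}" using i i' by simp
    then have "(c!a = c!i \<and> c!b = c!i') \<or> (c!a = c!i' \<and> c!b = c!i)"
      by (simp add: doubleton_eq_iff)
    then have "(a = i \<and> b = i') \<or> (a = i' \<and> b = i)"
      using dist[OF ab(1) i8] dist[OF ab(2) i'8] dist[OF ab(1) i'8] dist[OF ab(2) i8] by blast
    then show "nxt a b \<or> nxt b a" using i'(1) by auto
  qed
  have cnxt: "\<And>a d b. nxt a b \<Longrightarrow> nxt b d \<Longrightarrow> c!a \<noteq> c!d"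
  proof
    fix a b d assume "nxt a b" "nxt b d" "c!a = c!d"
    then show False using dist nxt_2 nxt_lt by metis
  qed
  have cset: "\<And>a. a < 8 \<Longrightarrow> c!a \<in> set c" using lc by simp
  have fwd: "\<And>j0 j1 j2 j3 j4 j5. nxt j0 j1 \<Longrightarrow> nxt j1 j2 \<Longrightarrow> nxt j2 j3 \<Longrightarrow> nxt j3 j4 \<Longrightarrow> nxt j4 j5 \<Longrightarrow>
      path_in_circuit c [c!j0, c!j1, c!j2, c!j3, c!j4, c!j5]"
    unfolding path_in_circuit_def using ceN cnxt cset nxt_lt by simp
  have bwd: "\<And>j0 j1 j2 j3 j4 j5. nxt j0 j1 \<Longrightarrow> nxt j1 j2 \<Longrightarrow> nxt j2 j3 \<Longrightarrow> nxt j3 j4 \<Longrightarrow> nxt j4 j5 \<Longrightarrow>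
      path_in_circuit c [c!j5, c!j4, c!j3, c!j2, c!j1, c!j0]"
    unfolding path_in_circuit_def using ceN cnxt[THEN not_sym] cset nxt_lt by (simp add: insert_commute)
  have pc: "is_path (set c) (circ_edges c) [x0,x1,x2,x3,x4,x5]" using cp unfolding path_in_circuit_def .
  have idx: "\<And>x. x \<in> set c \<Longrightarrow> \<exists>i<8. x = c!i"
  proof -
    fix x assume "x \<in> set c"
    then obtain i where i: "i < 9" "c!i = x" using lc by (auto simp: in_set_conv_nth)
    show "\<exists>i<8. x = c!i"
    proof (cases "i = 8")
      case True then show ?thesis using i c80 by (intro exI[of _ 0]) simp
    next
      case False then show ?thesis using i by (intro exI[of _ i]) simp
    qed
  qed
  have pin: "x0 \<in> set c" "x1 \<in> set c" "x2 \<in> set c" "x3 \<in> set c" "x4 \<in> set c" "x5 \<in> set c"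
    using pc by simp_all
  obtain i0 where i0: "i0 < 8" "x0 = c!i0" using idx[OF pin(1)] by blast
  obtain i1 where i1: "i1 < 8" "x1 = c!i1" using idx[OF pin(2)] by blast
  obtain i2 where i2: "i2 < 8" "x2 = c!i2" using idx[OF pin(3)] by blast
  obtain i3 where i3: "i3 < 8" "x3 = c!i3" using idx[OF pin(4)] by blast
  obtain i4 where i4: "i4 < 8" "x4 = c!i4" using idx[OF pin(5)] by blast
  obtain i5 where i5: "i5 < 8" "x5 = c!i5" using idx[OF pin(6)] by blast
  have pe: "{x0,x1} \<in> circ_edges c" "{x1,x2} \<in> circ_edges c" "{x2,x3} \<in> circ_edges c"
    "{x3,x4} \<in> circ_edges c" "{x4,x5} \<in> circ_edges c"
    "x0 \<noteq> x2" "x1 \<noteq> x3" "x2 \<noteq> x4" "x3 \<noteq> x5" using pc by simp_all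
  have s1: "nxt i0 i1 \<or> nxt i1 i0" using stp[OF i0(1) i1(1)] pe(1) i0 i1 by simp
  have s2: "nxt i1 i2 \<or> nxt i2 i1" using stp[OF i1(1) i2(1)] pe(2) i1 i2 by simp
  have s3: "nxt i2 i3 \<or> nxt i3 i2" using stp[OF i2(1) i3(1)] pe(3) i2 i3 by simp
  have s4: "nxt i3 i4 \<or> nxt i4 i3" using stp[OF i3(1) i4(1)] pe(4) i3 i4 by simp
  have s5: "nxt i4 i5 \<or> nxt i5 i4" using stp[OF i4(1) i5(1)] pe(5) i4 i5 by simp
  have n: "i0 \<noteq> i2" "i1 \<noteq> i3" "i2 \<noteq> i4" "i3 \<noteq> i5" using pe(6-9) i0 i1 i2 i3 i4 i5 by auto
  have d1: "(nxt i0 i1 \<longrightarrow> nxt i1 i2) \<and> (nxt i1 i0 \<longrightarrow> nxt i2 i1)" using nxt_dir[OF s1 s2 n(1) i1(1)] .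
  have d2: "(nxt i1 i2 \<longrightarrow> nxt i2 i3) \<and> (nxt i2 i1 \<longrightarrow> nxt i3 i2)" using nxt_dir[OF s2 s3 n(2) i2(1)] .
  have d3: "(nxt i2 i3 \<longrightarrow> nxt i3 i4) \<and> (nxt i3 i2 \<longrightarrow> nxt i4 i3)" using nxt_dir[OF s3 s4 n(3) i3(1)] .
  have d4: "(nxt i3 i4 \<longrightarrow> nxt i4 i5) \<and> (nxt i4 i3 \<longrightarrow> nxt i5 i4)" using nxt_dir[OF s4 s5 n(4) i4(1)] .
  from s1 show ?thesis
  proof
    assume a: "nxt i0 i1"
    then have ch: "nxt i1 i2" "nxt i2 i3" "nxt i3 i4" "nxt i4 i5" using d1 d2 d3 d4 by blast+
    obtain j6 j7 where j: "nxt i5 j6" "nxt j6 j7" "nxt j7 i0" using nxt_close[OF a ch] by blast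
    have "path_in_circuit c [c!i4, c!i5, c!j6, c!j7, c!i0, c!i1]" using fwd[OF ch(4) j a] .
    then show ?thesis using inH i0 i1 i4 i5 by blast
  next
    assume a: "nxt i1 i0"
    then have ch: "nxt i2 i1" "nxt i3 i2" "nxt i4 i3" "nxt i5 i4" using d1 d2 d3 d4 by blast+
    obtain j6 j7 where j: "nxt i0 j6" "nxt j6 j7" "nxt j7 i5" using nxt_close[OF ch(4) ch(3) ch(2) ch(1) a] by blast
    have "path_in_circuit c [c!i4, c!i5, c!j7, c!j6, c!i0, c!i1]" using bwd[OF a j ch(4)] .
    then show ?thesis using inH i0 i1 i4 i5 by blast
  qed
qed


lemma opp_adjV: "opp v x y \<Longrightarrow> v \<in> VV \<Longrightarrow> adj v x \<and> adj v y \<and> x \<noteq> y \<and> x \<in> VV \<and> y \<in> VV"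
  using opp_adj opp_neq adj_V by blast

lemma path5_iff: "is_path VV E [a,b,c,d,e] \<longleftrightarrow> adj a b \<and> adj b c \<and> adj c d \<and> adj d e \<and> a \<noteq> c \<and> b \<noteq> d \<and> c \<noteq> e"
  using adj_V by (auto simp: adjE)

lemma path6_iff: "is_path VV E [a,b,c,d,e,f] \<longleftrightarrow> adj a b \<and> adj b c \<and> adj c d \<and> adj d e \<and> adj e f \<and> a \<noteq> c \<and> b \<noteq> d \<and> c \<noteq> e \<and> d \<noteq> f"
  using adj_V by (auto simp: adjE)

lemma str5_iff: "straight opp [a,b,c,d,e] \<longleftrightarrow> opp b a c \<and> opp c b d \<and> opp d c e"
  by simp
lemma str6_iff: "straight opp [a,b,c,d,e,f] \<longleftrightarrow> opp b a c \<and> opp c b d \<and> opp d c e \<and> opp e d f"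
  by simp

definition sp5 where "sp5 a b c d e \<longleftrightarrow> is_path VV E [a,b,c,d,e] \<and> straight opp [a,b,c,d,e]"

lemma sp5_def2: "sp5 a b c d e \<longleftrightarrow> adj a b \<and> adj b c \<and> adj c d \<and> adj d e \<and> a \<noteq> c \<and> b \<noteq> d \<and> c \<noteq> e
   \<and> opp b a c \<and> opp c b d \<and> opp d c e"
  unfolding sp5_def path5_iff str5_iff by blast

lemma opp4_sp5: "opp4 x y \<longleftrightarrow> (\<exists>a b c. sp5 x a b c y)"
  unfolding opp4_def sp5_def ..

lemma sp5_rev: "sp5 a b c d e \<Longrightarrow> sp5 e d c b a"
  unfolding sp5_def2 using adj_sym opp_sym adj_V by metis

lemma opp4_sym: "opp4 x y \<Longrightarrow> opp4 y x"
  unfolding opp4_sp5 using sp5_rev by blast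

lemma AP5: assumes "sp5 x0 x1 x2 x3 x4" "adj x4 x5" "x3 \<noteq> x5" "opp x4 x3 x5"
  shows "\<exists>w6 w7. sp5 x5 w6 w7 x0 x1 \<and> opp x5 x4 w6"
proof -
  have "is_path VV E [x0,x1,x2,x3,x4,x5]" "straight opp [x0,x1,x2,x3,x4,x5]"
    using assms unfolding sp5_def2 path6_iff str6_iff by auto
  from AP[OF this] obtain w6 w7 where "is_path VV E [x4,x5,w6,w7,x0,x1]" "straight opp [x4,x5,w6,w7,x0,x1]"
    by blast
  then show ?thesis unfolding sp5_def2 path6_iff str6_iff by blast
qed

lemma T2: assumes "opp4 x y" "adj x r" shows "\<exists>a b. sp5 x r a b y"
proof -
  obtain x1 x2 x3 where p: "sp5 x x1 x2 x3 y" using assms(1) unfolding opp4_sp5 by blast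
  show ?thesis
  proof (cases "r = x1")
    case True then show ?thesis using p by blast
  next
    case False
    have xV: "x \<in> VV" using assms(2) adj_V by blast
    have a1: "adj x x1" using p unfolding sp5_def2 by blast
    obtain s where s: "adj x s" "opp x s r" "opp x s x1" using plump2[OF xV assms(2) a1] by blast
    have xVs: "x \<in> VV" by (rule xV)
    have st1: "sp5 s x x1 x2 x3" using p s opp_sym[OF xV] opp_neq[OF xV] adj_sym unfolding sp5_def2 by metis
    have e1: "adj x3 y" "x2 \<noteq> y" "opp x3 x2 y" using p unfolding sp5_def2 by auto
    obtain w6 w7 where w: "sp5 y w6 w7 s x" using AP5[OF st1 e1] by blast
    have w': "sp5 x s w7 w6 y" using sp5_rev[OF w] .
    have st2: "sp5 r x s w7 w6" using w' s opp_sym[OF xV] opp_neq[OF xV] adj_sym assms(2) unfolding sp5_def2 by metis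
    have e2: "adj w6 y" "w7 \<noteq> y" "opp w6 w7 y" using w' unfolding sp5_def2 by auto
    obtain u6 u7 where "sp5 y u6 u7 r x" using AP5[OF st2 e2] by blast
    then show ?thesis using sp5_rev by blast
  qed
qed

lemma T2r: assumes "opp4 x y" "adj y r" shows "\<exists>a b. sp5 x a b r y"
  using T2[OF opp4_sym[OF assms(1)] assms(2)] sp5_rev by blast

definition col where "col x y \<longleftrightarrow> (\<exists>l. adj l x \<and> adj l y)"

lemma opp4_irr: "\<not> opp4 x x"
proof
  assume "opp4 x x"
  then obtain a b c where p: "sp5 x a b c x" unfolding opp4_sp5 by blast
  then have "adj a x" "adj a b" "adj c b" "adj c x" "x \<noteq> b" "a \<noteq> c"
    unfolding sp5_def2 using adj_sym by blast+
  then show False using G1 by blast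
qed

lemma T3: assumes "x \<noteq> y" "adj l x" "adj l y" shows "\<not> opp4 x y"
proof
  assume "opp4 x y"
  then obtain e N where p: "sp5 x l e N y" using T2 assms(2) adj_sym by blast
  then have "e \<noteq> y" "adj l e" "adj N e" "adj N y" "l \<noteq> N" unfolding sp5_def2 using adj_sym by blast+
  then show False using G1 assms(3) by blast
qed

lemma T3c: "x \<noteq> y \<Longrightarrow> col x y \<Longrightarrow> \<not> opp4 x y" unfolding col_def using T3 by blast

lemma pointadj: "p \<in> P \<Longrightarrow> adj p l \<Longrightarrow> l \<in> L" using adj_PL PnL by blast
lemma lineadj: "l \<in> L \<Longrightarrow> adj l p \<Longrightarrow> p \<in> P" using adj_PL PnL by blast

lemma T4: assumes "b \<in> P" "opp b X Y" "adj X a" "a \<noteq> b" "adj Y c" "c \<noteq> b" shows "sp5 a X b Y c"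
proof -
  have bV: "b \<in> VV" using assms(1) by blast
  have o: "adj b X" "adj b Y" "X \<noteq> Y" using opp_adjV[OF assms(2) bV] by auto
  have L: "X \<in> L" "Y \<in> L" using o assms(1) pointadj by blast+
  have g: "opp X a b" "opp Y b c" using green[OF L(1) assms(3) adj_sym[OF o(1)] assms(4)]
      green[OF L(2) adj_sym[OF o(2)] assms(5) assms(6)[symmetric]] by auto
  show ?thesis unfolding sp5_def2 using assms o g adj_sym by blast
qed

lemma T4o: "b \<in> P \<Longrightarrow> opp b X Y \<Longrightarrow> adj X a \<Longrightarrow> a \<noteq> b \<Longrightarrow> adj Y c \<Longrightarrow> c \<noteq> b \<Longrightarrow> opp4 a c"
  using T4 opp4_sp5 by blast


lemma col_sym: "col x y \<Longrightarrow> col y x" unfolding col_def by blast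

lemma K1: "opp4 u v \<Longrightarrow> adj Z v \<Longrightarrow> \<exists>W z. sp5 u W z Z v"
  using T2r[of u v Z] adj_sym[of Z v] by blast

lemma K2: assumes "sp5 u W z Z v" "Z \<in> L" "adj Z z'" "z' \<noteq> z" shows "opp4 u z'"
proof -
  have "adj Z z" using assms(1) adj_sym unfolding sp5_def2 by blast
  then have "opp Z z z'" using green[OF assms(2) _ assms(3)] assms(4) by blast
  then have "sp5 u W z Z z'" using assms(1,3,4) unfolding sp5_def2 by blast
  then show ?thesis unfolding opp4_sp5 by blast
qed

lemma K3: assumes "sp5 u W z Z v" "u \<in> P" "adj Z z'" "z' \<noteq> v" "col u z'" "z' \<noteq> u" shows "z' = z"
proof (rule ccontr)
  assume "z' \<noteq> z"
  have "W \<in> L" using assms(1,2) pointadj unfolding sp5_def2 by blast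
  then have "z \<in> P" using assms(1) lineadj unfolding sp5_def2 by blast
  then have "Z \<in> L" using assms(1) pointadj adj_sym unfolding sp5_def2 by blast
  then have "opp4 u z'" using K2[OF assms(1) _ assms(3) \<open>z' \<noteq> z\<close>] by blast
  then show False using T3c[OF assms(6)[symmetric] assms(5)] by blast
qed

lemma WL: assumes "x \<in> P" "x \<noteq> y" "\<not> col x y" "\<not> opp4 x y" "col v y" "v \<noteq> y" shows "\<not> opp4 v x"
proof
  assume "opp4 v x"
  then have o: "opp4 x v" by (rule opp4_sym)
  obtain Z where Z: "adj Z v" "adj Z y" using assms(5) unfolding col_def by blast
  obtain W z where p: "sp5 x W z Z v" using K1[OF o Z(1)] by blast
  have "W \<in> L" using p assms(1) pointadj unfolding sp5_def2 by blast
  then have "z \<in> P" using p lineadj unfolding sp5_def2 by blast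
  then have ZL: "Z \<in> L" using p pointadj adj_sym unfolding sp5_def2 by blast
  show False
  proof (cases "y = z")
    case True
    then have "col x y" using p adj_sym unfolding sp5_def2 col_def by blast
    then show False using assms(3) by blast
  next
    case False
    then have "opp4 x y" using K2[OF p ZL Z(2)] by blast
    then show False using assms(4) by blast
  qed
qed

lemma T6: assumes "a \<in> P" "adj X a" "adj X b" "adj Y b" "adj Y c" "a \<noteq> b" "b \<noteq> c" "X \<noteq> Y" "\<not> opp b X Y"
  shows "\<not> opp4 a c"
proof
  assume "opp4 a c"
  then obtain b' Y' where p: "sp5 a X b' Y' c" using T2 assms(2) adj_sym by blast
  have XL: "X \<in> L" using assms(1,2) adj_sym pointadj by blast
  have bP: "b' \<in> P" "b \<in> P" using p XL assms(3) lineadj unfolding sp5_def2 by blast+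
  show False
  proof (cases "b' = b")
    case True
    then have "Y' = Y" using G1[OF assms(7)] p assms(4,5) adj_sym unfolding sp5_def2 by blast
    then show False using p True assms(9) unfolding sp5_def2 by blast
  next
    case False
    have "opp b' X Y'" "adj Y' c" "c \<noteq> b'" using p unfolding sp5_def2 by blast+
    then have "opp4 b c" using T4o[OF bP(1) _ assms(3)] False by blast
    then show False using T3[OF assms(7) assms(4,5)] by blast
  qed
qed

lemma TWp: assumes "x \<in> P" "y \<in> P" "x \<noteq> y" "\<not> col x y" "\<not> opp4 x y"
  "adj X x" "adj X b" "adj Y y" "adj Y b" "adj V y"
  shows "\<exists>v. adj V v \<and> v \<noteq> y \<and> col v x"
proof -
  have XL: "X \<in> L" using assms(1,6) adj_sym pointadj by blast
  have bP: "b \<in> P" using XL assms(7) lineadj by blast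
  have bV: "b \<in> VV" using bP by blast
  have xb: "x \<noteq> b" using assms(4,8,9) unfolding col_def by blast
  have yb: "y \<noteq> b" using assms(4,6,7) unfolding col_def by blast
  obtain M where M: "adj b M" "opp b M X" "opp b M Y" using plump2[OF bV adj_sym[OF assms(7)] adj_sym[OF assms(9)]] by blast
  have MV: "M \<in> VV" using M adj_V by blast
  obtain m where m: "adj M m" "opp M m b" using plump1[OF MV adj_sym[OF M(1)]] by blast
  have mb: "m \<noteq> b" using m opp_neq[OF MV] by blast
  have oxm: "opp4 x m" using T4o[OF bP opp_sym[OF bV M(2)] assms(6) xb m(1) mb] .
  have oym: "opp4 m y" using opp4_sym[OF T4o[OF bP opp_sym[OF bV M(3)] assms(8) yb m(1) mb]] .
  obtain R v where p: "sp5 m R v V y" using K1[OF oym assms(10)] by blast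
  have vV: "adj V v" "v \<noteq> y" "m \<noteq> v" "adj R m" "adj R v" using p adj_sym unfolding sp5_def2 by blast+
  have nvx: "\<not> opp4 v x" using WL[OF assms(1,3,4,5)] vV assms(10) unfolding col_def by blast
  have mP: "m \<in> P" using m M bP pointadj lineadj by blast
  have RL: "R \<in> L" using mP vV(4) adj_sym pointadj by blast
  obtain W z where q: "sp5 x W z R m" using K1[OF oxm vV(4)] by blast
  have "v = z"
  proof (rule ccontr)
    assume "v \<noteq> z"
    then have "opp4 x v" using K2[OF q RL vV(5)] by blast
    then show False using nvx opp4_sym by blast
  qed
  then have "col v x" using q adj_sym unfolding sp5_def2 col_def by blast
  then show ?thesis using vV by blast
qed


lemma col_wit: "adj l x \<Longrightarrow> adj l y \<Longrightarrow> col x y" unfolding col_def by blast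

lemma pointcol: "x \<in> P \<Longrightarrow> col x y \<Longrightarrow> y \<in> P"
  unfolding col_def using pointadj lineadj adj_PL PnL by blast

lemma LemW:
  assumes aP: "a \<in> P" and cP: "c \<in> P" and aX: "adj X a" and bX: "adj X b" and bY: "adj Y b" and cY: "adj Y c"
    and ab: "a \<noteq> b" and bc: "b \<noteq> c" and XY: "X \<noteq> Y" and nXY: "\<not> opp b X Y" and ac: "a \<noteq> c"
    and nac: "\<not> col a c" and bN: "adj b N" and XN: "opp b X N"
  shows "opp b Y N"
proof (rule ccontr)
  assume nYN: "\<not> opp b Y N"
  have XL: "X \<in> L" using aP aX adj_sym pointadj by blast
  have bP: "b \<in> P" using XL bX lineadj by blast
  have bV: "b \<in> VV" using bP by blast
  have XV: "X \<in> VV" using XL by blast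
  have NL: "N \<in> L" using bP bN pointadj by blast
  have NV: "N \<in> VV" using NL by blast
  have noac: "\<not> opp4 a c" using T6[OF aP aX bX bY cY ab bc XY nXY] .
  obtain a' where a': "adj X a'" "opp X a' a" "opp X a' b" using plump2[OF XV aX bX] by blast
  have a'n: "a' \<noteq> a" "a' \<noteq> b" using a' opp_neq[OF XV] by blast+
  have a'P: "a' \<in> P" using XL a'(1) lineadj by blast
  obtain s where s: "adj N s" "opp N s b" using plump1[OF NV adj_sym[OF bN]] by blast
  have sb: "s \<noteq> b" using s opp_neq[OF NV] by blast
  have sP: "s \<in> P" using NL s lineadj by blast
  have oas: "opp4 a s" using T4o[OF bP XN aX ab s(1) sb] .
  have oa's: "opp4 a' s" using T4o[OF bP XN a'(1) a'n(2) s(1) sb] .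
  have sc: "s \<noteq> c" using oas noac by blast
  have ncs: "\<not> col s c"
    using WL[OF aP ac nac noac, of s] sc oas opp4_sym by blast
  have YN: "Y \<noteq> N" using nXY XN by blast
  have nocs: "\<not> opp4 c s" using T6[OF cP cY bY adj_sym[OF bN] s(1) bc[symmetric] sb[symmetric] YN nYN] .
  have cV: "c \<in> VV" using cP by blast
  obtain C where C: "adj c C" "opp c C Y" using plump1[OF cV adj_sym[OF cY]] by blast
  obtain w where w: "adj C w" "w \<noteq> c" "col w s"
    using TWp[OF sP cP sc ncs _ s(1) adj_sym[OF bN] cY bY adj_sym[OF C(1)]] nocs opp4_sym by blast
  have wc: "col w c" using w C(1) adj_sym unfolding col_def by blast
  have obw: "opp4 b w" using T4o[OF cP opp_sym[OF cV C(2)] bY bc w(1) w(2)] by blast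
  have ws: "w \<noteq> s" using wc ncs by blast
  obtain Z where Z: "adj Z w" "adj Z s" using w(3) unfolding col_def by blast
  have wP: "w \<in> P" using pointcol[OF cP col_sym[OF wc]] .
  have ZL: "Z \<in> L" using wP Z(1) adj_sym pointadj by blast
  have step: "\<And>a0. a0 \<in> P \<Longrightarrow> opp4 a0 s \<Longrightarrow> a0 \<noteq> c \<Longrightarrow> \<not> col a0 c \<Longrightarrow> \<not> opp4 a0 c \<Longrightarrow> col a0 w"
  proof -
    fix a0 assume h: "a0 \<in> P" "opp4 a0 s" "a0 \<noteq> c" "\<not> col a0 c" "\<not> opp4 a0 c"
    obtain W1 z1 where q: "sp5 a0 W1 z1 Z s" using K1[OF h(2) Z(2)] by blast
    have "w = z1"
    proof (rule ccontr)
      assume "w \<noteq> z1"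
      then have "opp4 a0 w" using K2[OF q ZL Z(1)] by blast
      moreover have "\<not> opp4 w a0" using WL[OF h(1,3,4,5) wc w(2)] .
      ultimately show False using opp4_sym by blast
    qed
    then show "col a0 w" using q adj_sym unfolding sp5_def2 col_def by blast
  qed
  have caw: "col a w" using step[OF aP oas ac nac noac] .
  have na'c: "\<not> opp4 a' c"
  proof
    assume "opp4 a' c"
    moreover have "\<not> opp4 a' c"
      using WL[OF cP ac[symmetric] _ _ col_wit[OF a'(1) aX] a'n(1)] nac noac col_sym opp4_sym by blast
    ultimately show False by blast
  qed
  have a'c: "a' \<noteq> c" using oa's nocs by blast
  have nca'c: "\<not> col a' c"
  proof
    assume "col a' c"
    then have "\<not> opp4 a' s" using WL[OF sP sc ncs _ _ a'c] nocs opp4_sym by blast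
    then show False using oa's by blast
  qed
  have ca'w: "col a' w" using step[OF a'P oa's a'c nca'c na'c] .
  obtain W2 z2 where q: "sp5 w W2 z2 X b" using K1[OF opp4_sym[OF obw] bX] by blast
  have aw: "a \<noteq> w" using wc nac by blast
  have a'w: "a' \<noteq> w" using wc nca'c by blast
  have "a = z2" using K3[OF q wP aX ab col_sym[OF caw] aw] .
  moreover have "a' = z2" using K3[OF q wP a'(1) a'n(2) col_sym[OF ca'w] a'w] .
  ultimately show False using a'n(1) by simp
qed


lemma gdist_le: "is_walk VV E w \<Longrightarrow> hd w = a \<Longrightarrow> last w = b \<Longrightarrow> gdist VV E a b \<le> plen w"
  unfolding gdist_def by (rule Least_le) blast

lemma walk_short: assumes "is_walk VV E w" "hd w = a" "last w = c" "a \<in> P" "c \<in> P" "plen w < 4"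
  shows "a = c \<or> col a c"
proof -
  have ne: "w \<noteq> []" using assms(1) unfolding is_walk_def by simp
  then have "length w \<ge> 1" by (cases w) auto
  moreover have "length w \<le> 4" using assms(6) by simp
  ultimately have "length w = 1 \<or> length w = 2 \<or> length w = 3 \<or> length w = 4" by linarith
  then consider "length w = 1" | "length w = 2" | "length w = 3" | "length w = 4" by blast
  then show ?thesis
  proof cases
    case 1 then obtain x where "w = [x]" by (auto simp: length_Suc_conv)
    then show ?thesis using assms by simp
  next
    case 2 then obtain x y where w: "w = [x,y]" by (auto simp: length_Suc_conv numeral_eq_Suc)
    then have "adj a c" using assms by (simp add: adjE)
    then show ?thesis using assms(4,5) adj_PL PnL by blast
  next
    case 3 then obtain x y z where w: "w = [x,y,z]" by (auto simp: length_Suc_conv numeral_eq_Suc)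
    then have "adj a y" "adj y c" using assms by (simp_all add: adjE)
    then show ?thesis using adj_sym unfolding col_def by blast
  next
    case 4 then obtain x y z t where w: "w = [x,y,z,t]" by (auto simp: length_Suc_conv numeral_eq_Suc)
    then have "adj a y" "adj y z" "adj z c" using assms by (simp_all add: adjE)
    then have False using assms(4,5) adj_PL PnL by blast
    then show ?thesis ..
  qed
qed

lemma weed_data: assumes "weed P L E opp w"
  shows "\<exists>a X b Y c. a \<in> P \<and> c \<in> P \<and> adj X a \<and> adj X b \<and> adj Y b \<and> adj Y c \<and> a \<noteq> b \<and> b \<noteq> c \<and> X \<noteq> Y
     \<and> \<not> opp b X Y \<and> a \<noteq> c \<and> \<not> col a c"
proof -
  have w: "is_path VV E w" "plen w = 4" "\<not> straight opp w" "w!0 \<in> P" "w!2 \<in> P" "w!4 \<in> P"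
    "gdist VV E (w!0) (w!4) = 4" using assms unfolding weed_def by auto
  have "length w = 5" using w(1,2) unfolding is_path_def is_walk_def by (cases w) auto
  then obtain a X b Y c where we: "w = [a,X,b,Y,c]" using list5 by blast
  have p: "adj a X" "adj X b" "adj b Y" "adj Y c" "a \<noteq> b" "X \<noteq> Y" "b \<noteq> c" "a \<in> P" "b \<in> P" "c \<in> P"
    using w we by (simp_all add: adjE)
  have XL: "X \<in> L" "Y \<in> L" using p pointadj adj_sym by blast+
  have g: "opp X a b" "opp Y b c" using green[OF XL(1) adj_sym[OF p(1)] p(2) p(5)] green[OF XL(2) adj_sym[OF p(3)] p(4) p(7)] by auto
  have nXY: "\<not> opp b X Y" using w(3) we g by simp
  have ac: "a \<noteq> c"
  proof
    assume "a = c"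
    then have "gdist VV E a c \<le> plen [a]" using gdist_le[of "[a]" a c] p(8) by simp
    then show False using w(7) we by simp
  qed
  have nac: "\<not> col a c"
  proof
    assume "col a c"
    then obtain l where l: "adj l a" "adj l c" unfolding col_def by blast
    have "is_walk VV E [a,l,c]" using l adj_V adj_sym by (auto simp: adjE)
    then have "gdist VV E a c \<le> plen [a,l,c]" using gdist_le[of "[a,l,c]" a c] by simp
    then show False using w(7) we by simp
  qed
  show ?thesis using p ac nac nXY adj_sym by blast
qed

lemma mkweed: assumes "a \<in> P" "c \<in> P" "adj X a" "adj X b" "adj Y b" "adj Y c" "a \<noteq> b" "b \<noteq> c" "X \<noteq> Y"
     "\<not> opp b X Y" "a \<noteq> c" "\<not> col a c"
  shows "weed P L E opp [a,X,b,Y,c]"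
proof -
  have XL: "X \<in> L" using assms(1,3) adj_sym pointadj by blast
  have bP: "b \<in> P" using XL assms(4) lineadj by blast
  have pth: "is_path VV E [a,X,b,Y,c]" unfolding path5_iff using assms adj_sym by blast
  have ns: "\<not> straight opp [a,X,b,Y,c]" using assms(10) by simp
  have wk: "is_walk VV E [a,X,b,Y,c]" using pth unfolding is_path_def by simp
  have gd: "gdist VV E a c = 4"
    unfolding gdist_def
  proof (rule Least_equality)
    show "\<exists>w. is_walk VV E w \<and> hd w = a \<and> last w = c \<and> plen w = 4"
      using wk by (intro exI[of _ "[a,X,b,Y,c]"]) simp
  next
    fix n assume "\<exists>w. is_walk VV E w \<and> hd w = a \<and> last w = c \<and> plen w = n"
    then obtain w where "is_walk VV E w" "hd w = a" "last w = c" "plen w = n" by blast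
    then show "4 \<le> n" using walk_short[of w a c] assms(1,2,11,12) by force
  qed
  show ?thesis unfolding weed_def using pth ns assms(1,2) bP gd by simp
qed

lemma opsub: assumes "a \<in> P" "c \<in> P" "adj X a" "adj X b" "adj Y b" "adj Y c" "a \<noteq> b" "b \<noteq> c" "X \<noteq> Y"
     "\<not> opp b X Y" "a \<noteq> c" "\<not> col a c" "opp4 X Z"
  shows "opp4 Y Z"
proof -
  obtain N s where p: "sp5 X b N s Z" using T2[OF assms(13) assms(4)] by blast
  have "opp b X N" "adj b N" using p unfolding sp5_def2 by blast+
  then have YN: "opp b Y N" using LemW[OF assms(1-12)] by blast
  have XL: "X \<in> L" using assms(1,3) adj_sym pointadj by blast
  have bP: "b \<in> P" using XL assms(4) lineadj by blast
  have bV: "b \<in> VV" using bP by blast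
  have NL: "N \<in> L" using bP p pointadj unfolding sp5_def2 by blast
  have "opp N b s" using p unfolding sp5_def2 by blast
  then have "sp5 Y b N s Z" using p YN assms(5) adj_sym opp_neq[OF bV YN] unfolding sp5_def2 by blast
  then show ?thesis unfolding opp4_sp5 by blast
qed

lemma op_set_eq: "op_set 4 VV E opp x = {y \<in> VV. opp4 x y}"
  unfolding op_set_def opposite_iff ..

lemma weed_nonflat: assumes "weed P L E opp w" shows "\<not> flat 4 VV E opp"
proof -
  obtain a X b Y c where d: "a \<in> P" "c \<in> P" "adj X a" "adj X b" "adj Y b" "adj Y c" "a \<noteq> b" "b \<noteq> c" "X \<noteq> Y"
     "\<not> opp b X Y" "a \<noteq> c" "\<not> col a c" using weed_data[OF assms] by blast
  have XL: "X \<in> L" using d(1,3) adj_sym pointadj by blast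
  have bP: "b \<in> P" using XL d(4) lineadj by blast
  have bV: "b \<in> VV" using bP by blast
  have d2: "\<not> opp b Y X" using d(10) opp_sym[OF bV] by blast
  have "\<And>Z. opp4 X Z \<Longrightarrow> opp4 Y Z" using opsub[OF d] by blast
  moreover have "\<And>Z. opp4 Y Z \<Longrightarrow> opp4 X Z"
    using opsub[OF d(2,1,6,5,4,3) d(8)[symmetric] d(7)[symmetric] d(9)[symmetric] d2 d(11)[symmetric]] d(12) col_sym by blast
  ultimately have "op_set 4 VV E opp X = op_set 4 VV E opp Y" unfolding op_set_eq by blast
  moreover have "X \<in> VV" "Y \<in> VV" using d adj_V by blast+
  ultimately show ?thesis unfolding flat_def using d(9) by blast
qed


lemma exopp: assumes "x \<in> VV" shows "\<exists>y. opp4 x y"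
proof -
  obtain r where r: "adj x r" using plump0[OF assms] by blast
  have rV: "r \<in> VV" using r adj_V by blast
  obtain s where s: "adj r s" "opp r s x" using plump1[OF rV adj_sym[OF r]] by blast
  have sV: "s \<in> VV" using s adj_V by blast
  obtain t where t: "adj s t" "opp s t r" using plump1[OF sV adj_sym[OF s(1)]] by blast
  have tV: "t \<in> VV" using t adj_V by blast
  obtain u where u: "adj t u" "opp t u s" using plump1[OF tV adj_sym[OF t(1)]] by blast
  have "sp5 x r s t u" unfolding sp5_def2 using r s t u opp_sym rV sV tV opp_neq by metis
  then show ?thesis unfolding opp4_sp5 by blast
qed

lemma opp4_type: "opp4 x y \<Longrightarrow> x \<in> P \<Longrightarrow> y \<in> P" "opp4 x y \<Longrightarrow> x \<in> L \<Longrightarrow> y \<in> L"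
  unfolding opp4_sp5 sp5_def2 using adj_PL PnL by blast+

lemma opp4_V: "opp4 x y \<Longrightarrow> y \<in> VV"
  unfolding opp4_sp5 sp5_def2 using adj_V by blast

lemma T5incl: assumes KL: "K \<in> L" and UL: "U \<in> L" and bP: "b \<in> P" and bK: "adj b K" and bU: "adj b U"
  and inc: "\<And>Z. opp4 K Z \<Longrightarrow> opp4 U Z" and bM: "adj b M" and KM: "opp b K M"
  shows "opp b U M"
proof -
  have bV: "b \<in> VV" using bP by blast
  have MinL: "M \<in> L" using bP bM pointadj by blast
  have MV: "M \<in> VV" using MinL by blast
  obtain m where m: "adj M m" "opp M m b" using plump1[OF MV adj_sym[OF bM]] by blast
  have mb: "m \<noteq> b" using m opp_neq[OF MV] by blast
  have mP: "m \<in> P" using MinL m lineadj by blast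
  have mV: "m \<in> VV" using mP by blast
  obtain S where S: "adj m S" "opp m S M" using plump1[OF mV adj_sym[OF m(1)]] by blast
  have "opp M b m" using opp_sym[OF MV m(2)] .
  then have "sp5 K b M m S" unfolding sp5_def2
    using bK bM m(1) S KM opp_sym[OF mV S(2)] opp_neq[OF bV KM] opp_neq[OF mV S(2)] mb adj_sym by metis
  then have "opp4 K S" unfolding opp4_sp5 by blast
  then have "opp4 U S" using inc by blast
  then obtain M' s' where q: "sp5 U b M' s' S" using T2 adj_sym[OF bU] by blast
  show ?thesis
  proof (cases "s' = m")
    case True
    then have "M' = M" using G1[OF mb[symmetric]] q bM m(1) adj_sym unfolding sp5_def2 by blast
    then show ?thesis using q unfolding sp5_def2 by blast
  next
    case False
    have "adj S s'" "b \<noteq> s'" "adj M' b" "adj M' s'" using q adj_sym unfolding sp5_def2 by blast+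
    then have "opp4 b s'" using T4o[OF mP opp_sym[OF mV S(2)] adj_sym[OF bM] mb[symmetric]] False by blast
    then show ?thesis using T3 \<open>b \<noteq> s'\<close> \<open>adj M' b\<close> \<open>adj M' s'\<close> by blast
  qed
qed

lemma ISO: assumes pP: "p \<in> P" and p1: "sp5 p L1 l1 M1 q" and p2: "sp5 p L2 l2 M2 q" and o: "opp p L1 L2"
  shows "opp q M1 M2"
proof -
  have a: "adj L1 l1" "l1 \<noteq> p" "adj L2 l2" "l2 \<noteq> p" using p1 p2 adj_sym unfolding sp5_def2 by blast+
  have ol: "opp4 l1 l2" using T4o[OF pP o a] .
  have L1L: "L1 \<in> L" using pP p1 pointadj unfolding sp5_def2 by blast
  have l1P: "l1 \<in> P" using L1L a(1) lineadj by blast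
  have b: "adj M2 l2" "adj M2 q" "q \<noteq> l2" "adj M1 l1" "adj M1 q" "q \<noteq> l1" using p1 p2 adj_sym unfolding sp5_def2 by blast+
  obtain W z where r: "sp5 l1 W z M2 l2" using K1[OF ol b(1)] by blast
  have "q = z" using K3[OF r l1P b(2) b(3) _ b(6)] b(4,5) unfolding col_def by blast
  then have "W = M1" using G1[OF b(6)[symmetric]] r b(4,5) adj_sym unfolding sp5_def2 by blast
  then show ?thesis using r \<open>q = z\<close> unfolding sp5_def2 by blast
qed


context
  assumes NW: "\<not> (\<exists>w. weed P L E opp w)"
begin

lemma NWc: assumes "a \<in> P" "c \<in> P" "adj X a" "adj X b" "adj Y b" "adj Y c" "a \<noteq> b" "b \<noteq> c" "X \<noteq> Y"
     "\<not> opp b X Y" "a \<noteq> c" shows "col a c"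
  using mkweed[OF assms] NW by blast

lemma flat_points: assumes aP: "a \<in> P" and cP: "c \<in> P" and eq: "\<And>z. opp4 a z \<longleftrightarrow> opp4 c z" shows "a = c"
proof (rule ccontr)
  assume ac: "a \<noteq> c"
  have cV: "c \<in> VV" using cP by blast
  have colcase: "\<not> col a c"
  proof
    assume "col a c"
    then obtain X where X: "adj X a" "adj X c" unfolding col_def by blast
    obtain Y where Y: "adj c Y" "opp c Y X" using plump1[OF cV adj_sym[OF X(2)]] by blast
    have YV: "Y \<in> VV" using Y adj_V by blast
    obtain d where d: "adj Y d" "opp Y d c" using plump1[OF YV adj_sym[OF Y(1)]] by blast
    have dc: "d \<noteq> c" using d opp_neq[OF YV] by blast
    have "opp4 a d" using T4o[OF cP opp_sym[OF cV Y(2)] X(1) ac d(1) dc] .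
    then have "opp4 c d" using eq by blast
    then show False using T3[OF dc[symmetric] adj_sym[OF Y(1)] d(1)] by blast
  qed
  obtain z where az: "opp4 a z" using exopp[of a] aP by blast
  have cz: "opp4 z c" using eq az opp4_sym by blast
  obtain C where C: "adj c C" using plump0[OF cV] by blast
  obtain W w where p: "sp5 z W w C c" using K1[OF cz adj_sym[OF C]] by blast
  have wC: "adj C w" "w \<noteq> c" "adj W z" "adj W w" using p adj_sym unfolding sp5_def2 by blast+
  have CL: "C \<in> L" using cP C pointadj by blast
  have wP: "w \<in> P" using CL wC(1) lineadj by blast
  have wa: "w \<noteq> a" using colcase wC(1) C adj_sym unfolding col_def by blast
  have WL': "W \<in> L" using wP wC(4) adj_sym pointadj by blast
  obtain W1 z1 where q: "sp5 a W1 z1 W z" using K1[OF az wC(3)] by blast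
  have "w = z1"
  proof (rule ccontr)
    assume "w \<noteq> z1"
    then have "opp4 a w" using K2[OF q WL' wC(4)] by blast
    then have "opp4 c w" using eq by blast
    then show False using T3[OF wC(2)[symmetric] adj_sym[OF C] wC(1)] by blast
  qed
  then have aw: "adj W1 a" "adj W1 w" using q adj_sym unfolding sp5_def2 by blast+
  have W1C: "W1 \<noteq> C" using colcase aw(1) C adj_sym unfolding col_def by blast
  have "opp w W1 C"
  proof (rule ccontr)
    assume "\<not> opp w W1 C"
    then have "col a c" using NWc[OF aP cP aw(1) aw(2) wC(1) adj_sym[OF C] wa[symmetric] wC(2) W1C] ac by blast
    then show False using colcase by blast
  qed
  then have "opp4 a c" using T4o[OF wP _ aw(1) wa[symmetric] adj_sym[OF C] wC(2)[symmetric]] by blast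
  then have "opp4 c c" using eq by blast
  then show False using opp4_irr by blast
qed


lemma MLlem: assumes KL: "K \<in> L" and UL: "U \<in> L" and KU: "K \<noteq> U" and bP: "b \<in> P" and bK: "adj b K" and bU: "adj b U"
  and inc: "\<And>Z. opp4 K Z \<Longrightarrow> opp4 U Z"
  shows False
proof -
  have bV: "b \<in> VV" using bP by blast
  have Ninc: "\<And>M. adj b M \<Longrightarrow> opp b K M \<Longrightarrow> opp b U M" using T5incl[OF KL UL bP bK bU inc] by blast
  have nKU: "\<not> opp b K U" using Ninc[OF bU] opp_irr[OF bV] by blast
  have KV: "K \<in> VV" using KL by blast
  obtain v where v: "adj K v" "opp K v b" using plump1[OF KV adj_sym[OF bK]] by blast
  have vb: "v \<noteq> b" using v opp_neq[OF KV] by blast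
  have vP: "v \<in> P" using KL v lineadj by blast
  have vV: "v \<in> VV" using vP by blast
  obtain Y where Y: "adj v Y" "opp v Y K" using plump1[OF vV adj_sym[OF v(1)]] by blast
  have YV: "Y \<in> VV" using Y adj_V by blast
  obtain d where d: "adj Y d" "opp Y d v" using plump1[OF YV adj_sym[OF Y(1)]] by blast
  have dv: "d \<noteq> v" using d opp_neq[OF YV] by blast
  have obd: "opp4 b d" using T4o[OF vP opp_sym[OF vV Y(2)] adj_sym[OF bK] vb[symmetric] d(1) dv] .
  obtain u A where q: "sp5 b U u A d" using T2[OF obd bU] by blast
  have ub: "u \<noteq> b" "adj U u" "adj A u" "adj A d" "u \<noteq> d" using q adj_sym unfolding sp5_def2 by blast+
  have uP: "u \<in> P" using UL ub(2) lineadj by blast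
  have uv: "u \<noteq> v"
  proof
    assume "u = v"
    then have "U = K" using G1[OF ub(1)] ub(2) v(1) bK bU adj_sym by metis
    then show False using KU by blast
  qed
  have nUK: "\<not> opp b U K" using nKU opp_sym[OF bV] by blast
  have "col u v" using NWc[OF uP vP ub(2) adj_sym[OF bU] adj_sym[OF bK] v(1) ub(1) vb[symmetric] KU[symmetric] nUK uv] .
  then obtain J where J: "adj J u" "adj J v" unfolding col_def by blast
  have nJY: "\<not> opp v J Y"
  proof
    assume "opp v J Y"
    then have "opp4 u d" using T4o[OF vP _ J(1) uv d(1) dv] by blast
    then show False using T3[OF ub(5) ub(3) ub(4)] by blast
  qed
  have uV: "u \<in> VV" using uP by blast
  obtain Y' where Y': "adj u Y'" "opp u Y' J" "opp u Y' U" using plump2[OF uV adj_sym[OF J(1)] adj_sym[OF ub(2)]] by blast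
  have Y'V: "Y' \<in> VV" using Y' adj_V by blast
  obtain d' where d': "adj Y' d'" "opp Y' d' u" using plump1[OF Y'V adj_sym[OF Y'(1)]] by blast
  have d'u: "d' \<noteq> u" using d' opp_neq[OF Y'V] by blast
  have s1: "sp5 v J u Y' d'" using T4[OF uP opp_sym[OF uV Y'(2)] J(2) uv[symmetric] d'(1) d'u] .
  have s2: "sp5 b U u Y' d'" using T4[OF uP opp_sym[OF uV Y'(3)] adj_sym[OF bU] ub(1)[symmetric] d'(1) d'u] .
  have ovd': "opp4 v d'" using s1 unfolding opp4_sp5 by blast
  have obd': "opp4 b d'" using s2 unfolding opp4_sp5 by blast
  obtain v' A' where s3: "sp5 b K v' A' d'" using T2[OF obd' bK] by blast
  have vd': "v \<noteq> d'" using ovd' opp4_irr by blast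
  have v'v: "v' \<noteq> v"
  proof
    assume "v' = v"
    then have "adj A' v" "adj A' d'" using s3 adj_sym unfolding sp5_def2 by blast+
    then show False using T3[OF vd'] ovd' by blast
  qed
  have s4: "sp5 v K v' A' d'"
  proof -
    have "adj K v'" using s3 unfolding sp5_def2 by blast
    then have "opp K v v'" using green[OF KL v(1)] v'v by blast
    then show ?thesis using s3 v(1) v'v adj_sym unfolding sp5_def2 by blast
  qed
  obtain m B where s5: "sp5 v Y m B d'" using T2[OF ovd' Y(1)] by blast
  have Bd': "adj d' B" using s5 adj_sym unfolding sp5_def2 by blast
  obtain n L0 where s6: "sp5 d' B n L0 b" using T2[OF opp4_sym[OF obd'] Bd'] by blast
  have d'P: "d' \<in> P" using opp4_type(1)[OF obd' bP] .
  have i1: "opp d' A' B" using ISO[OF vP s4 s5 opp_sym[OF vV Y(2)]] .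
  have i2: "opp b K L0" using ISO[OF d'P sp5_rev[OF s3] s6 i1] .
  have bL0: "adj b L0" using s6 adj_sym unfolding sp5_def2 by blast
  have i3: "opp b U L0" using Ninc[OF bL0 i2] .
  have i4: "opp d' Y' B" using ISO[OF bP s2 sp5_rev[OF s6] i3] .
  have i5: "opp v J Y" using ISO[OF d'P sp5_rev[OF s1] sp5_rev[OF s5] i4] .
  show False using i5 nJY by blast
qed


lemma flat_lines: assumes UL: "U \<in> L" and VL: "V \<in> L" and eq: "\<And>z. opp4 U z \<longleftrightarrow> opp4 V z" shows "U = V"
proof (rule ccontr)
  assume UV: "U \<noteq> V"
  have VV': "V \<in> VV" using VL by blast
  obtain y where y: "adj V y" "\<not> adj U y"
  proof -
    obtain y0 where y0: "adj V y0" using plump0[OF VV'] by blast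
    show ?thesis
    proof (cases "adj U y0")
      case False then show ?thesis using that y0 by blast
    next
      case True
      obtain y1 where y1: "adj V y1" "opp V y1 y0" using plump1[OF VV' y0] by blast
      have "y1 \<noteq> y0" using y1 opp_neq[OF VV'] by blast
      then have "\<not> adj U y1" using G1[of y0 y1 U V] True y0 y1(1) UV by blast
      then show ?thesis using that y1 by blast
    qed
  qed
  have yP: "y \<in> P" using VL y(1) lineadj by blast
  have yV: "y \<in> VV" using yP by blast
  obtain Ll where Ll: "adj y Ll" "opp y Ll V" using plump1[OF yV adj_sym[OF y(1)]] by blast
  have LlV: "Ll \<in> VV" using Ll adj_V by blast
  obtain l where l: "adj Ll l" "opp Ll l y" using plump1[OF LlV adj_sym[OF Ll(1)]] by blast
  have lV: "l \<in> VV" using l adj_V by blast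
  obtain Z where Z: "adj l Z" "opp l Z Ll" using plump1[OF lV adj_sym[OF l(1)]] by blast
  have "sp5 V y Ll l Z" unfolding sp5_def2
    using y(1) Ll l Z opp_sym yV LlV lV opp_neq by metis
  then have "opp4 V Z" unfolding opp4_sp5 by blast
  then have oUZ: "opp4 U Z" using eq by blast
  have lZ: "adj Z l" using Z adj_sym by blast
  obtain W2 u where q: "sp5 Z l W2 u U" using T2[OF opp4_sym[OF oUZ] lZ] by blast
  have qf: "adj l W2" "adj W2 u" "adj u U" "l \<noteq> u" "W2 \<noteq> U" "opp u W2 U" "opp W2 l u"
    using q unfolding sp5_def2 by blast+
  have uy: "u \<noteq> y" using qf(3) y(2) adj_sym by blast
  have uP: "u \<in> P" using UL qf(3) adj_sym lineadj by blast
  have lP: "l \<in> P" using yP Ll(1) l(1) pointadj lineadj by blast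
  have ly: "l \<noteq> y" using l opp_neq[OF LlV] by blast
  have cuy: "col u y"
  proof (cases "W2 = Ll")
    case True then show ?thesis using qf(2) Ll(1) adj_sym unfolding col_def by blast
  next
    case False
    show ?thesis
    proof (cases "opp l W2 Ll")
      case True
      have uV: "u \<in> VV" using uP by blast
      have W2L: "W2 \<in> L" using lP qf(1) pointadj by blast
      have "opp W2 u l" using opp_sym[OF _ qf(7)] W2L by blast
      then have "sp5 U u W2 l Ll" unfolding sp5_def2
        using qf True l(1) opp_sym[OF uV qf(6)] adj_sym False by metis
      then have "opp4 U Ll" unfolding opp4_sp5 by blast
      then have "opp4 V Ll" using eq by blast
      moreover have "V \<noteq> Ll" using Ll opp_irr[OF yV] by blast
      ultimately show ?thesis using T3[OF _ adj_sym[OF y(1)] Ll(1)] by blast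
    next
      case nt: False
      show ?thesis using NWc[OF uP yP qf(2) adj_sym[OF qf(1)] l(1) adj_sym[OF Ll(1)] qf(4)[symmetric] ly False nt uy] .
    qed
  qed
  then obtain K where K: "adj K u" "adj K y" unfolding col_def by blast
  have KU: "K \<noteq> U" using K(2) y(2) by blast
  have KL: "K \<in> L" using uP K(1) adj_sym pointadj by blast
  have uV: "u \<in> VV" using uP by blast
  have nKU: "\<not> opp u K U"
  proof
    assume o: "opp u K U"
    obtain L' where L': "adj y L'" "opp y L' K" using plump1[OF yV adj_sym[OF K(2)]] by blast
    have "opp K y u" using green[OF KL K(2) K(1) uy[symmetric]] .
    then have "sp5 L' y K u U" unfolding sp5_def2
      using L' K o uy qf(3) KU adj_sym opp_neq[OF yV L'(2)] by metis
    then have "opp4 U L'" using opp4_sym unfolding opp4_sp5 by blast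
    then have "opp4 V L'" using eq by blast
    moreover have "V \<noteq> L'" using opp4_irr calculation by blast
    ultimately show False using T3[OF _ adj_sym[OF y(1)] L'(1)] by blast
  qed
  have step1: "\<And>Z'. opp4 K Z' \<Longrightarrow> opp4 U Z'"
  proof -
    fix Z' assume oKZ: "opp4 K Z'"
    obtain W z where r: "sp5 K u W z Z'" using T2[OF oKZ K(1)] by blast
    have rf: "adj u W" "adj W z" "opp u K W" "u \<noteq> z" "K \<noteq> W" using r unfolding sp5_def2 by blast+
    show "opp4 U Z'"
    proof (cases "opp u U W")
      case True
      then have "sp5 U u W z Z'" using r qf(3) opp_neq[OF uV True] adj_sym unfolding sp5_def2 by metis
      then show ?thesis unfolding opp4_sp5 by blast
    next
      case False
      have WU: "W \<noteq> U" using rf(3) nKU by blast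
      have WL: "W \<in> L" using uP rf(1) pointadj by blast
      have "opp W u z" using green[OF WL adj_sym[OF rf(1)] rf(2) rf(4)] .
      then have "sp5 y K u W z" unfolding sp5_def2
        using K rf uy[symmetric] green[OF KL K(2) K(1) uy[symmetric]] adj_sym by metis
      then have oyz: "opp4 z y" using opp4_sym unfolding opp4_sp5 by blast
      obtain A v where t: "sp5 z A v V y" using K1[OF oyz y(1)] by blast
      have zP: "z \<in> P" using WL rf(2) lineadj by blast
      have zV: "z \<in> VV" using zP by blast
      have zA: "adj z A" using t unfolding sp5_def2 by blast
      obtain L3 where L3: "adj z L3" "opp z L3 A" using plump1[OF zV zA] by blast
      have "sp5 L3 z A v V" unfolding sp5_def2 using t[unfolded sp5_def2] L3 adj_sym opp_neq[OF zV L3(2)] by metis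
      then have "opp4 V L3" using opp4_sym unfolding opp4_sp5 by blast
      then have oUL3: "opp4 U L3" using eq by blast
      obtain W' z' where r2: "sp5 U u W' z' L3" using T2[OF oUL3 adj_sym[OF qf(3)]] by blast
      have r2f: "adj W' u" "adj W' z'" "opp u U W'" "opp z' W' L3" "u \<noteq> z'" "adj L3 z'" using r2 adj_sym unfolding sp5_def2 by blast+
      show ?thesis
      proof (cases "z' = z")
        case True
        then have "W' = W" using G1[OF rf(4)] r2f(1,2) rf(1,2) adj_sym by metis
        then show ?thesis using r2f(3) False by blast
      next
        case zz: False
        have z'P: "z' \<in> P" using r2f(1,2) uP pointadj lineadj adj_sym by blast
        have "opp4 u z" using T4o[OF z'P r2f(4) r2f(1) r2f(5) adj_sym[OF L3(1)]] zz by metis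
        then show ?thesis using T3[OF rf(4) adj_sym[OF rf(1)] rf(2)] by blast
      qed
    qed
  qed
  show False using MLlem[OF KL UL KU uP adj_sym[OF K(1)] qf(3) step1] .
qed

lemma flat_all: "flat 4 VV E opp"
  unfolding flat_def op_set_eq
proof (intro ballI impI)
  fix x y assume xy: "x \<in> VV" "y \<in> VV" and eq0: "{z \<in> VV. opp4 x z} = {z \<in> VV. opp4 y z}"
  have eq: "\<And>z. opp4 x z \<longleftrightarrow> opp4 y z" using eq0 opp4_V by blast
  obtain z where z: "opp4 x z" using exopp[OF xy(1)] by blast
  have zy: "opp4 y z" using eq z by blast
  consider "x \<in> P" "y \<in> P" | "x \<in> L" "y \<in> L" | "x \<in> P" "y \<in> L" | "x \<in> L" "y \<in> P" using xy by blast
  then show "x = y"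
  proof cases
    case 1 then show ?thesis using flat_points eq by blast
  next
    case 2 then show ?thesis using flat_lines eq by blast
  next
    case 3 then show ?thesis using opp4_type z zy PnL by blast
  next
    case 4 then show ?thesis using opp4_type z zy PnL by blast
  qed
qed

end

theorem main: "flat 4 VV E opp \<longleftrightarrow> \<not> (\<exists>w. weed P L E opp w)"
  using flat_all weed_nonflat by blast

end

theorem proposition4p14:
  fixes P L :: "'a set" and E :: "'a set set" and opp :: "'a \<Rightarrow> 'a \<Rightarrow> 'a \<Rightarrow> bool"
  assumes "veldkamp_quadrangle P L E opp"
    and "green L E opp"
  shows "flat 4 (P \<union> L) E opp \<longleftrightarrow> \<not> (\<exists>w. weed P L E opp w)"
proof -
  interpret gvq P L E opp using assms by unfold_locales
  show ?thesis using main .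
qed

end
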